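(* For all $i,j\in I$, \[ \langle\!\langle \mathrm{Twirl}_i,\mathrm{Twirl}_j\rangle\!\rangle=|\mathcal E_i|\,\delta_{ij}. \] Consequently $\{|\mathcal E_i|^{-1/2}\,\mathrm{Twirl}_i\}_{i\in I}$ is an orthonormal set in $\mathcal L(\mathcal L(V))$.
   Context: Let $V$ be a finite-dimensional complex Hilbert space and $\mathcal L(V)$ the space of linear operators on $V$, equipped with the Hilbert–Schmidt inner product $\langle X_1,X_2\rangle=\mathrm{Tr}(X_1^\dagger X_2)$ (conjugate-linear in the first argument). Linear maps $\mathcal L(V)\to\mathcal L(V)$ are called superoperators; the space $\mathcal L(\mathcal L(V))$ of superoperators carries the inner product $\langle\!\langle \mathcal S,\mathcal T\rangle\!\rangle=\mathrm{Tr}(\mathcal S^\dagger\mathcal T)=\sum_{Y\in\mathcal B}\langle \mathcal S(Y),\mathcal T(Y)\rangle$, where $\mathcal B$ is any orthonormal basis of $\mathcal L(V)$ (adjoint and trace taken with respect to the Hilbert–Schmidt inner product). Fix an orthogonal decomposition $\mathcal L(V)=\bigoplus_{i\in I}\mathcal E_i$ and write $|\mathcal E_i|=\dim\mathcal E_i$. For each $i$, fix an orthonormal basis $\mathcal B_i$ of $\mathcal E_i$ and define the twirling superoperator $\mathrm{Twirl}_i(X)=\sum_{E\in\mathcal B_i}E^\dagger XE$ (it does not depend on the choice of orthonormal basis $\mathcal B_i$). *)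

theory Defs
  imports "HOL-Analysis.Analysis"
begin

text \<open>V = C^n with n = CARD('n); operators on V are n x n complex matrices.\<close>
type_synonym 'n op = "complex^'n^'n"

definition cscale :: "complex \<Rightarrow> ('n::finite) op \<Rightarrow> 'n op" where
  "cscale c A = (\<chi> i j. c * A$i$j)"

definition adj :: "('n::finite) op \<Rightarrow> 'n op" where
  "adj A = (\<chi> i j. cnj (A$j$i))"

definition tr :: "('n::finite) op \<Rightarrow> complex" where
  "tr A = (\<Sum>i\<in>UNIV. A$i$i)"

text \<open>Hilbert-Schmidt inner product, conjugate-linear in the first argument.\<close>
definition hs_inner :: "('n::finite) op \<Rightarrow> 'n op \<Rightarrow> complex" where
  "hs_inner X1 X2 = tr (adj X1 ** X2)"

definition unit_op :: "('n::finite) \<Rightarrow> 'n \<Rightarrow> 'n op" where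
  "unit_op a b = (\<chi> i j. if i = a \<and> j = b then 1 else 0)"

text \<open>Inner product of superoperators, computed in the orthonormal basis of matrix units.\<close>
definition sop_inner :: "(('n::finite) op \<Rightarrow> 'n op) \<Rightarrow> ('n op \<Rightarrow> 'n op) \<Rightarrow> complex" where
  "sop_inner S T = (\<Sum>(a,b)\<in>UNIV. hs_inner (S (unit_op a b)) (T (unit_op a b)))"

definition hs_orthonormal :: "('n::finite) op set \<Rightarrow> bool" where
  "hs_orthonormal B \<longleftrightarrow> (\<forall>E\<in>B. \<forall>F\<in>B. hs_inner E F = (if E = F then 1 else 0))"

definition twirl :: "('n::finite) op set \<Rightarrow> 'n op \<Rightarrow> 'n op" where
  "twirl B X = (\<Sum>E\<in>B. adj E ** X ** E)"

abbreviation csubspace :: "('n::finite) op set \<Rightarrow> bool" where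
  "csubspace S \<equiv> module.subspace cscale S"

abbreviation cspan :: "('n::finite) op set \<Rightarrow> 'n op set" where
  "cspan S \<equiv> module.span cscale S"

abbreviation cdim :: "('n::finite) op set \<Rightarrow> nat" where
  "cdim S \<equiv> vector_space.dim cscale S"

end

theory Submission
  imports Defs
begin

lemma hs_inner_expand: "hs_inner X Y = (\<Sum>i\<in>UNIV. \<Sum>k\<in>UNIV. cnj (X$k$i) * Y$k$i)"
  by (simp add: hs_inner_def tr_def adj_def matrix_matrix_mult_def)

lemma inner_hs: "(X::('n::finite) op) \<bullet> Y = Re (hs_inner X Y)"
  by (simp add: hs_inner_expand inner_vec_def inner_complex_def Re_sum)
     (rule sum.swap)

lemma orthonormal_finite:
  assumes "hs_orthonormal (B::('n::finite) op set)" shows "finite B"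
proof -
  have "pairwise orthogonal B"
    using assms by (auto simp: pairwise_def orthogonal_def inner_hs hs_orthonormal_def)
  moreover have "0 \<notin> B"
  proof
    assume "0 \<in> B"
    then have "hs_inner 0 (0::'n op) = 1" using assms by (auto simp: hs_orthonormal_def)
    then show False by (simp add: hs_inner_expand)
  qed
  ultimately show ?thesis using pairwise_orthogonal_independent independent_bound by blast
qed

lemma vs: "vector_space (cscale :: complex \<Rightarrow> ('n::finite) op \<Rightarrow> _)"
  by unfold_locales (auto simp: cscale_def vec_eq_iff algebra_simps)

lemma sum_if_conj: "(\<Sum>ka\<in>(UNIV::'n::finite set). if ka = a \<and> P then c else 0) = (if P then c else 0)"
  by (cases P) auto

lemma twirl_unit_entry:
  "(adj E ** unit_op a b ** E)$i$j = cnj (E$a$i) * E$b$j"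
proof -
  have 1: "(\<Sum>ka\<in>UNIV. cnj (E $ ka $ i) * (if ka = a \<and> k = b then 1 else 0)) = (if k = b then cnj (E$a$i) else 0)" for k
    by (cases "k = b") (auto simp: mult.commute[of "cnj _"] if_distrib[of "\<lambda>x. x * _"] cong: if_cong)
  have 2: "(\<Sum>k\<in>UNIV. (if k = b then cnj (E$a$i) else 0) * E$k$j) = cnj (E$a$i) * E$b$j"
    by (simp add: if_distrib[of "\<lambda>x. x * _"] cong: if_cong)
  show ?thesis
    by (simp add: adj_def unit_op_def matrix_matrix_mult_def 1 2)
qed

lemma perm4: "(\<Sum>a\<in>A. \<Sum>b\<in>B. \<Sum>i\<in>I. \<Sum>k\<in>K. (f a b i k :: complex)) = (\<Sum>k\<in>K. \<Sum>a\<in>A. \<Sum>i\<in>I. \<Sum>b\<in>B. f a b i k)"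
proof -
  have "(\<Sum>a\<in>A. \<Sum>b\<in>B. \<Sum>i\<in>I. \<Sum>k\<in>K. f a b i k) = (\<Sum>a\<in>A. \<Sum>k\<in>K. \<Sum>i\<in>I. \<Sum>b\<in>B. f a b i k)"
  proof (rule sum.cong[OF refl])
    fix a
    have "(\<Sum>b\<in>B. \<Sum>i\<in>I. \<Sum>k\<in>K. f a b i k) = (\<Sum>b\<in>B. \<Sum>k\<in>K. \<Sum>i\<in>I. f a b i k)"
      by (rule sum.cong[OF refl], rule sum.swap)
    also have "\<dots> = (\<Sum>k\<in>K. \<Sum>b\<in>B. \<Sum>i\<in>I. f a b i k)" by (rule sum.swap)
    also have "\<dots> = (\<Sum>k\<in>K. \<Sum>i\<in>I. \<Sum>b\<in>B. f a b i k)"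
      by (rule sum.cong[OF refl], rule sum.swap)
    finally show "(\<Sum>b\<in>B. \<Sum>i\<in>I. \<Sum>k\<in>K. f a b i k) = (\<Sum>k\<in>K. \<Sum>i\<in>I. \<Sum>b\<in>B. f a b i k)" .
  qed
  also have "\<dots> = (\<Sum>k\<in>K. \<Sum>a\<in>A. \<Sum>i\<in>I. \<Sum>b\<in>B. f a b i k)" by (rule sum.swap)
  finally show ?thesis .
qed

lemma perm4b: "(\<Sum>a\<in>A. \<Sum>b\<in>B. \<Sum>i\<in>I. \<Sum>k\<in>K. (f a b i k :: complex)) = (\<Sum>k\<in>K. \<Sum>i\<in>I. \<Sum>a\<in>A. \<Sum>b\<in>B. f a b i k)"
proof -
  have 1: "(\<Sum>i\<in>I. \<Sum>k\<in>K. f a b i k) = (\<Sum>k\<in>K. \<Sum>i\<in>I. f a b i k)" for a b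
    by (rule sum.swap)
  have 2: "(\<Sum>b\<in>B. \<Sum>k\<in>K. \<Sum>i\<in>I. f a b i k) = (\<Sum>k\<in>K. \<Sum>b\<in>B. \<Sum>i\<in>I. f a b i k)" for a
    by (rule sum.swap)
  have 3: "(\<Sum>a\<in>A. \<Sum>k\<in>K. \<Sum>b\<in>B. \<Sum>i\<in>I. f a b i k) = (\<Sum>k\<in>K. \<Sum>a\<in>A. \<Sum>b\<in>B. \<Sum>i\<in>I. f a b i k)"
    by (rule sum.swap)
  have 4: "(\<Sum>b\<in>B. \<Sum>i\<in>I. f a b i k) = (\<Sum>i\<in>I. \<Sum>b\<in>B. f a b i k)" for a k
    by (rule sum.swap)
  have 5: "(\<Sum>a\<in>A. \<Sum>i\<in>I. \<Sum>b\<in>B. f a b i k) = (\<Sum>i\<in>I. \<Sum>a\<in>A. \<Sum>b\<in>B. f a b i k)" for k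
    by (rule sum.swap)
  have "(\<Sum>a\<in>A. \<Sum>b\<in>B. \<Sum>i\<in>I. \<Sum>k\<in>K. f a b i k) = (\<Sum>a\<in>A. \<Sum>b\<in>B. \<Sum>k\<in>K. \<Sum>i\<in>I. f a b i k)"
    by (simp only: 1)
  also have "\<dots> = (\<Sum>k\<in>K. \<Sum>a\<in>A. \<Sum>b\<in>B. \<Sum>i\<in>I. f a b i k)"
    by (simp only: 2 3)
  also have "\<dots> = (\<Sum>k\<in>K. \<Sum>i\<in>I. \<Sum>a\<in>A. \<Sum>b\<in>B. f a b i k)"
    by (simp only: 4 5)
  finally show ?thesis .
qed

lemma pull4: "(\<Sum>a\<in>X1. \<Sum>b\<in>X2. \<Sum>i\<in>X3. \<Sum>k\<in>X4. \<Sum>e\<in>A. (f a b i k e :: complex))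
   = (\<Sum>e\<in>A. \<Sum>a\<in>X1. \<Sum>b\<in>X2. \<Sum>i\<in>X3. \<Sum>k\<in>X4. f a b i k e)"
proof -
  have 1: "(\<Sum>k\<in>X4. \<Sum>e\<in>A. f a b i k e) = (\<Sum>e\<in>A. \<Sum>k\<in>X4. f a b i k e)" for a b i
    by (rule sum.swap)
  have 2: "(\<Sum>i\<in>X3. \<Sum>e\<in>A. \<Sum>k\<in>X4. f a b i k e) = (\<Sum>e\<in>A. \<Sum>i\<in>X3. \<Sum>k\<in>X4. f a b i k e)" for a b
    by (rule sum.swap)
  have 3: "(\<Sum>b\<in>X2. \<Sum>e\<in>A. \<Sum>i\<in>X3. \<Sum>k\<in>X4. f a b i k e) = (\<Sum>e\<in>A. \<Sum>b\<in>X2. \<Sum>i\<in>X3. \<Sum>k\<in>X4. f a b i k e)" for a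
    by (rule sum.swap)
  have 4: "(\<Sum>a\<in>X1. \<Sum>e\<in>A. \<Sum>b\<in>X2. \<Sum>i\<in>X3. \<Sum>k\<in>X4. f a b i k e) = (\<Sum>e\<in>A. \<Sum>a\<in>X1. \<Sum>b\<in>X2. \<Sum>i\<in>X3. \<Sum>k\<in>X4. f a b i k e)"
    by (rule sum.swap)
  show ?thesis by (simp only: 1 2 3 4)
qed

lemma key:
  fixes A C :: "('n::finite) op set"
  shows "sop_inner (twirl A) (twirl C) = (\<Sum>E\<in>A. \<Sum>F\<in>C. cnj (hs_inner E F) * hs_inner E F)"
proof -
  have tw: "twirl A (unit_op a b) $ k $ i = (\<Sum>E\<in>A. cnj (E$a$k) * E$b$i)" for A :: "'n op set" and a b k i
    by (simp add: twirl_def twirl_unit_entry)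
  have "sop_inner (twirl A) (twirl C) = (\<Sum>a\<in>UNIV. \<Sum>b\<in>UNIV. \<Sum>i\<in>UNIV. \<Sum>k\<in>UNIV.
       cnj (twirl A (unit_op a b) $ k $ i) * twirl C (unit_op a b) $ k $ i)"
    unfolding sop_inner_def hs_inner_expand UNIV_Times_UNIV[symmetric] sum.cartesian_product[symmetric]
    by simp
  also have "\<dots> = (\<Sum>a\<in>UNIV. \<Sum>b\<in>UNIV. \<Sum>i\<in>UNIV. \<Sum>k\<in>UNIV. \<Sum>E\<in>A. \<Sum>F\<in>C.
       (E$a$k * cnj (F$a$k)) * (cnj (E$b$i) * F$b$i))"
  proof (intro sum.cong refl)
    fix a b i k
    show "cnj (twirl A (unit_op a b) $ k $ i) * twirl C (unit_op a b) $ k $ i = (\<Sum>E\<in>A. \<Sum>F\<in>C.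
       (E$a$k * cnj (F$a$k)) * (cnj (E$b$i) * F$b$i))"
      unfolding tw cnj_sum sum_product by (intro sum.cong refl) (simp add: mult_ac)
  qed
  also have "\<dots> = (\<Sum>E\<in>A. \<Sum>F\<in>C. \<Sum>a\<in>UNIV. \<Sum>b\<in>UNIV. \<Sum>i\<in>UNIV. \<Sum>k\<in>UNIV.
       (E$a$k * cnj (F$a$k)) * (cnj (E$b$i) * F$b$i))"
    by (subst pull4[where A=A]) (intro sum.cong refl, rule pull4)
  also have "\<dots> = (\<Sum>E\<in>A. \<Sum>F\<in>C. cnj (hs_inner E F) * hs_inner E F)"
  proof (intro sum.cong refl)
    fix E F :: "'n op"
    show "(\<Sum>a\<in>UNIV. \<Sum>b\<in>UNIV. \<Sum>i\<in>UNIV. \<Sum>k\<in>UNIV.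
       (E$a$k * cnj (F$a$k)) * (cnj (E$b$i) * F$b$i)) = cnj (hs_inner E F) * hs_inner E F"
      unfolding hs_inner_expand cnj_sum sum_product
      by (rule trans[OF perm4b]) (intro sum.cong refl, simp)
  qed
  finally show ?thesis .
qed

lemma hs_inner_add_right: "hs_inner X (Y + Z) = hs_inner X Y + hs_inner X Z"
  by (simp add: hs_inner_expand distrib_left sum.distrib)

lemma hs_inner_zero_right: "hs_inner X 0 = 0"
  by (simp add: hs_inner_expand)

lemma hs_inner_sum_right: "hs_inner X (sum f t) = (\<Sum>w\<in>t. hs_inner X (f w))"
  by (induction t rule: infinite_finite_induct) (simp_all add: hs_inner_add_right hs_inner_zero_right)

lemma hs_inner_cscale: "hs_inner (cscale a X) (cscale b Y) = cnj a * b * hs_inner X Y"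
  by (simp add: hs_inner_expand cscale_def sum_distrib_left mult_ac)

lemma hs_inner_cscale_right: "hs_inner X (cscale b Y) = b * hs_inner X Y"
  using hs_inner_cscale[of 1 X b Y] by (simp add: cscale_def vec_eq_iff)

lemma sop_inner_scale:
  "sop_inner (\<lambda>X. cscale (of_real r) (S X)) (\<lambda>X. cscale (of_real s) (T X)) = of_real (r * s) * sop_inner S T"
  by (simp add: sop_inner_def hs_inner_cscale sum_distrib_left case_prod_beta)

lemma orthonormal_indep:
  assumes "hs_orthonormal (B::('n::finite) op set)"
  shows "\<not> module.dependent cscale B"
proof
  assume "module.dependent cscale B"
  then obtain t u v where t: "finite t" "t \<subseteq> B" "(\<Sum>v\<in>t. cscale (u v) v) = 0" and v: "v \<in> t" "u v \<noteq> 0"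
    by (auto simp: module.dependent_explicit[OF vs[unfolded module_iff_vector_space[symmetric]]])
  have "0 = hs_inner v (\<Sum>w\<in>t. cscale (u w) w)" using t by (simp add: hs_inner_zero_right)
  also have "\<dots> = (\<Sum>w\<in>t. u w * (if v = w then 1 else 0))"
    using t v assms unfolding hs_inner_sum_right hs_inner_cscale_right hs_orthonormal_def
    by (intro sum.cong refl) (auto dest!: subsetD[OF t(2)])
  also have "\<dots> = u v" using t v by (simp add: if_distrib cong: if_cong)
  finally show False using v by simp
qed

theorem mainTheorem1:
  fixes E B :: "'i \<Rightarrow> ('n::finite) op set"
  assumes subsp: "\<And>i. csubspace (E i)"
    and orth: "\<And>i j X Y. i \<noteq> j \<Longrightarrow> X \<in> E i \<Longrightarrow> Y \<in> E j \<Longrightarrow> hs_inner X Y = 0"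
    and total: "cspan (\<Union>i. E i) = UNIV"
    and basis_sub: "\<And>i. B i \<subseteq> E i"
    and basis_on: "\<And>i. hs_orthonormal (B i)"
    and basis_span: "\<And>i. cspan (B i) = E i"
  shows "(\<forall>i j. sop_inner (twirl (B i)) (twirl (B j))
                 = (if i = j then of_nat (cdim (E i)) else 0))
       \<and> (\<forall>i j. E i \<noteq> {0} \<longrightarrow> E j \<noteq> {0} \<longrightarrow>
            sop_inner (\<lambda>X. cscale (of_real (1 / sqrt (real (cdim (E i))))) (twirl (B i) X))
                      (\<lambda>X. cscale (of_real (1 / sqrt (real (cdim (E j))))) (twirl (B j) X))
            = (if i = j then 1 else 0))"
proof -
  have vsp: "vector_space (cscale :: complex \<Rightarrow> 'n op \<Rightarrow> _)" by (rule vs)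
  have mod: "module (cscale :: complex \<Rightarrow> 'n op \<Rightarrow> _)" using vs by (simp add: module_iff_vector_space)
  have fin: "finite (B i)" for i using basis_on orthonormal_finite by blast
  have dimeq: "cdim (E i) = card (B i)" for i
  proof -
    have "module.span cscale (E i) = module.span cscale (B i)"
      using basis_span[of i] module.span_span[OF mod] by metis
    then show ?thesis
      using vector_space.dim_eq_card[OF vsp, of "B i" "E i"] orthonormal_indep[OF basis_on[of i]] by metis
  qed
  have inner: "sop_inner (twirl (B i)) (twirl (B j)) = (if i = j then of_nat (cdim (E i)) else 0)" for i j
  proof (cases "i = j")
    case True
    have "sop_inner (twirl (B i)) (twirl (B j)) = (\<Sum>X\<in>B i. \<Sum>Y\<in>B i. if X = Y then 1 else 0)"
      unfolding key True using basis_on[of j] unfolding hs_orthonormal_def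
      by (intro sum.cong refl) auto
    also have "\<dots> = of_nat (card (B i))" using fin[of i] by simp
    finally show ?thesis using True dimeq by simp
  next
    case False
    have "sop_inner (twirl (B i)) (twirl (B j)) = (\<Sum>X\<in>B i. \<Sum>Y\<in>B j. 0)"
      unfolding key using orth[OF False] basis_sub
      by (intro sum.cong refl) (metis mult_zero_right subsetD)
    then show ?thesis using False by simp
  qed
  have pos: "E i \<noteq> {0} \<Longrightarrow> cdim (E i) > 0" for i
  proof -
    assume "E i \<noteq> {0}"
    then have "B i \<noteq> {}" using basis_span[of i] module.span_empty[OF mod] by metis
    then show ?thesis using dimeq fin by (simp add: card_gt_0_iff)
  qed
  show ?thesis
  proof (intro conjI allI impI)
    fix i j show "sop_inner (twirl (B i)) (twirl (B j)) = (if i = j then of_nat (cdim (E i)) else 0)"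
      by (rule inner)
  next
    fix i j assume h: "E i \<noteq> {0}" "E j \<noteq> {0}"
    show "sop_inner (\<lambda>X. cscale (of_real (1 / sqrt (real (cdim (E i))))) (twirl (B i) X))
                      (\<lambda>X. cscale (of_real (1 / sqrt (real (cdim (E j))))) (twirl (B j) X))
            = (if i = j then 1 else 0)"
    proof (cases "i = j")
      case True
      have d: "real (cdim (E i)) > 0" using pos[OF h(1)] by simp
      have "(1 / sqrt (real (cdim (E i)))) * (1 / sqrt (real (cdim (E i)))) * real (cdim (E i)) = 1"
        using d by (simp add: field_simps)
      then have "complex_of_real (1 / sqrt (real (cdim (E i))) * (1 / sqrt (real (cdim (E i))))) * of_nat (cdim (E i)) = 1"
        by (metis of_real_1 of_real_mult of_real_of_nat_eq)
      then show ?thesis unfolding sop_inner_scale inner True by simp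
    next
      case False
      then show ?thesis unfolding sop_inner_scale inner by simp
    qed
  qed
qed

end
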